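(* Let $(A,\varphi,\phi_A,[\cdot,\cdot]_A,a_A,K,\langle\cdot,\cdot\rangle)$ be a para-Kähler hom-Lie algebroid, $\Omega(X,Y)=\langle(\phi_A\circ K)X,Y\rangle$, and $\nabla^a$ the connection determined by $\Omega(\nabla^{a}_XY,\phi_A(Z))=a_A(\phi_A(X))\Omega(Y,Z)-\Omega(\phi_A(Y),[X,Z]_A)$. Then for $\epsilon\in\{1,-1\}$: $\nabla^a$ restricts to a product on $\Gamma(A^\epsilon)$, and $(\Gamma(A^\epsilon),\nabla^a,\phi_{A^\epsilon})$ is a hom-left symmetric algebra, i.e. for all $X,Y,Z\in\Gamma(A^\epsilon)$, $$\nabla^a_{\nabla^a_XY}\phi_A(Z)-\nabla^a_{\phi_A(X)}\nabla^a_YZ=\nabla^a_{\nabla^a_YX}\phi_A(Z)-\nabla^a_{\phi_A(Y)}\nabla^a_XZ;$$ its commutator $\nabla^a_XY-\nabla^a_YX$ equals $[X,Y]_A$ and defines a hom-Lie algebra structure on $\Gamma(A^\epsilon)$; consequently $(A^\epsilon,\varphi,\phi_{A^\epsilon},[\cdot,\cdot]_{A^\epsilon},a_{A^\epsilon})$ (restrictions of $\phi_A,[\cdot,\cdot]_A,a_A$) is a hom-Lie algebroid.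
   Context: Standing conventions. $M$ is a smooth manifold, $\varphi:M\to M$ a diffeomorphism, $\varphi^*f=f\circ\varphi$. A hom-bundle $(A\to M,\varphi,\phi_A)$ is a vector bundle $A\to M$ together with an invertible $\mathbb R$-linear map $\phi_A:\Gamma(A)\to\Gamma(A)$ with $\phi_A(fX)=\varphi^*(f)\phi_A(X)$. $\varphi^!TM$ is the pullback bundle; its sections are identified with $\mathbb R$-linear maps $D:C^\infty(M)\to C^\infty(M)$ with $D(fg)=D(f)\varphi^*(g)+\varphi^*(f)D(g)$. A hom-Lie algebroid $(A,\varphi,\phi_A,[\cdot,\cdot]_A,a_A)$ consists of a hom-bundle, a skew-symmetric $\mathbb R$-bilinear bracket on $\Gamma(A)$ with $\phi_A[X,Y]_A=[\phi_A X,\phi_A Y]_A$ and $[\phi_A(X),[Y,Z]_A]_A+[\phi_A(Y),[Z,X]_A]_A+[\phi_A(Z),[X,Y]_A]_A=0$ (a hom-Lie algebra), and a bundle map $a_A:A\to\varphi^!TM$ such that $[X,fY]_A=\varphi^*(f)[X,Y]_A+a_A(\phi_A(X))(f)\phi_A(Y)$, $\varphi^*\circ a_A(X)=a_A(\phi_A(X))\circ\varphi^*$, and $a_A([X,Y]_A)\circ\varphi^*=a_A(\phi_AX)\circ a_A(Y)-a_A(\phi_AY)\circ a_A(X)$. Pseudo-Riemannian metric: a symmetric nondegenerate bilinear form $\langle\cdot,\cdot\rangle$ on $A$ with $\langle\phi_AX,\phi_AY\rangle=\varphi^*\langle X,Y\rangle$. The hom-Levi-Civita connection is the unique $\mathbb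 R$-bilinear $\nabla:\Gamma(A)\times\Gamma(A)\to\Gamma(A)$ with $\nabla_{fX}Y=\varphi^*(f)\nabla_XY$, $\nabla_X(fY)=\varphi^*(f)\nabla_XY+a_A(\phi_AX)(f)\phi_A(Y)$, $[X,Y]_A=\nabla_XY-\nabla_YX$, and $a_A(\phi_AX)\langle Y,Z\rangle=\langle\nabla_XY,\phi_AZ\rangle+\langle\phi_AY,\nabla_XZ\rangle$. An almost para-complex structure is an invertible map $K:\Gamma(A)\to\Gamma(A)$ with $(\phi_A\circ K)^2=\mathrm{Id}$, $\phi_A\circ K=K\circ\phi_A$, and such that $A^1=\ker(\phi_A\circ K-\mathrm{Id})$ and $A^{-1}=\ker(\phi_A\circ K+\mathrm{Id})$ have the same rank (so $A=A^1\oplus A^{-1}$). $(K,\langle\cdot,\cdot\rangle)$ is almost para-Hermitian if $\langle(\phi_A\circ K)X,(\phi_A\circ K)Y\rangle=-\langle X,Y\rangle$. A para-Kähler hom-Lie algebroid is an almost para-Hermitian hom-Lie algebroid with $\nabla_X\phi_A(KY)=\phi_A(K(\nabla_XY))$ for all $X,Y$, $\nabla$ the hom-Levi-Civita connection. $\phi_{A^\epsilon}$ denotes the restriction of $\phi_A$ to $\Gamma(A^\epsilon)$. *)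

theory Defs
  imports Complex_Main "HOL-Library.Function_Algebras"
begin

text \<open>
The manifold M is a type 'm; C^infty(M) is modelled by a
set Cs of real functions on 'm (a unital subalgebra of 'm => real); phi is a bijection of 'm
with phi^* f = f o phi preserving Cs in both directions.  Sections of a vector bundle A are
modelled by a carrier set G of a real vector space 'a together with a Cs-module action sm.
Sections of the pullback bundle phi^! TM are phi-derivations D of Cs.
\<close>

definition pb :: "('m \<Rightarrow> 'm) \<Rightarrow> ('m \<Rightarrow> real) \<Rightarrow> ('m \<Rightarrow> real)" where
  "pb \<phi> f = f \<circ> \<phi>"

definition function_algebra :: "('m \<Rightarrow> real) set \<Rightarrow> bool" where
  "function_algebra Cs \<longleftrightarrow>
     (\<forall>c. (\<lambda>_. c) \<in> Cs) \<and>
     (\<forall>f\<in>Cs. \<forall>g\<in>Cs. f + g \<in> Cs \<and> f * g \<in> Cs \<and> - f \<in> Cs)"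

definition diffeo_on :: "('m \<Rightarrow> real) set \<Rightarrow> ('m \<Rightarrow> 'm) \<Rightarrow> bool" where
  "diffeo_on Cs \<phi> \<longleftrightarrow> bij \<phi> \<and> (\<forall>f. f \<in> Cs \<longleftrightarrow> pb \<phi> f \<in> Cs)"

definition sec_module ::
  "('m \<Rightarrow> real) set \<Rightarrow> (('m \<Rightarrow> real) \<Rightarrow> 'a::real_vector \<Rightarrow> 'a) \<Rightarrow> 'a set \<Rightarrow> bool" where
  "sec_module Cs sm G \<longleftrightarrow>
     0 \<in> G \<and> (\<forall>X\<in>G. \<forall>Y\<in>G. X + Y \<in> G) \<and> (\<forall>X\<in>G. \<forall>f\<in>Cs. sm f X \<in> G) \<and>
     (\<forall>X\<in>G. \<forall>c. sm (\<lambda>_. c) X = c *\<^sub>R X) \<and>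
     (\<forall>X\<in>G. \<forall>Y\<in>G. \<forall>f\<in>Cs. sm f (X + Y) = sm f X + sm f Y) \<and>
     (\<forall>X\<in>G. \<forall>f\<in>Cs. \<forall>g\<in>Cs. sm (f + g) X = sm f X + sm g X) \<and>
     (\<forall>X\<in>G. \<forall>f\<in>Cs. \<forall>g\<in>Cs. sm (f * g) X = sm f (sm g X))"

definition real_linear_on :: "'a::real_vector set \<Rightarrow> ('a \<Rightarrow> 'b::real_vector) \<Rightarrow> bool" where
  "real_linear_on G T \<longleftrightarrow>
     (\<forall>X\<in>G. \<forall>Y\<in>G. T (X + Y) = T X + T Y) \<and> (\<forall>X\<in>G. \<forall>c. T (c *\<^sub>R X) = c *\<^sub>R T X)"

definition hom_bundle ::
  "('m \<Rightarrow> real) set \<Rightarrow> ('m \<Rightarrow> 'm) \<Rightarrow> (('m \<Rightarrow> real) \<Rightarrow> 'a::real_vector \<Rightarrow> 'a) \<Rightarrow> 'a set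
   \<Rightarrow> ('a \<Rightarrow> 'a) \<Rightarrow> bool" where
  "hom_bundle Cs \<phi> sm G phiA \<longleftrightarrow>
     sec_module Cs sm G \<and> bij_betw phiA G G \<and> real_linear_on G phiA \<and>
     (\<forall>X\<in>G. \<forall>f\<in>Cs. phiA (sm f X) = sm (pb \<phi> f) (phiA X))"

definition phi_derivation ::
  "('m \<Rightarrow> real) set \<Rightarrow> ('m \<Rightarrow> 'm) \<Rightarrow> (('m \<Rightarrow> real) \<Rightarrow> ('m \<Rightarrow> real)) \<Rightarrow> bool" where
  "phi_derivation Cs \<phi> D \<longleftrightarrow>
     (\<forall>f\<in>Cs. D f \<in> Cs) \<and>
     (\<forall>f\<in>Cs. \<forall>g\<in>Cs. D (f + g) = D f + D g) \<and>
     (\<forall>f\<in>Cs. \<forall>c. D ((\<lambda>_. c) * f) = (\<lambda>_. c) * D f) \<and>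
     (\<forall>f\<in>Cs. \<forall>g\<in>Cs. D (f * g) = D f * pb \<phi> g + pb \<phi> f * D g)"

text \<open>Bundle map A -> phi^! TM, i.e. a Cs-linear map from sections to phi-derivations.\<close>
definition anchor_map ::
  "('m \<Rightarrow> real) set \<Rightarrow> ('m \<Rightarrow> 'm) \<Rightarrow> (('m \<Rightarrow> real) \<Rightarrow> 'a::real_vector \<Rightarrow> 'a) \<Rightarrow> 'a set
   \<Rightarrow> ('a \<Rightarrow> ('m \<Rightarrow> real) \<Rightarrow> ('m \<Rightarrow> real)) \<Rightarrow> bool" where
  "anchor_map Cs \<phi> sm G a \<longleftrightarrow>
     (\<forall>X\<in>G. phi_derivation Cs \<phi> (a X)) \<and>
     (\<forall>X\<in>G. \<forall>Y\<in>G. \<forall>f\<in>Cs. a (X + Y) f = a X f + a Y f) \<and>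
     (\<forall>X\<in>G. \<forall>g\<in>Cs. \<forall>f\<in>Cs. a (sm g X) f = g * a X f)"

definition hom_Lie_algebra :: "'a::real_vector set \<Rightarrow> ('a \<Rightarrow> 'a) \<Rightarrow> ('a \<Rightarrow> 'a \<Rightarrow> 'a) \<Rightarrow> bool" where
  "hom_Lie_algebra G phiA br \<longleftrightarrow>
     (\<forall>X\<in>G. \<forall>Y\<in>G. br X Y \<in> G) \<and>
     (\<forall>X\<in>G. real_linear_on G (br X)) \<and>
     (\<forall>X\<in>G. \<forall>Y\<in>G. br X Y = - br Y X) \<and>
     (\<forall>X\<in>G. \<forall>Y\<in>G. phiA (br X Y) = br (phiA X) (phiA Y)) \<and>
     (\<forall>X\<in>G. \<forall>Y\<in>G. \<forall>Z\<in>G.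
        br (phiA X) (br Y Z) + br (phiA Y) (br Z X) + br (phiA Z) (br X Y) = 0)"

definition hom_Lie_algebroid ::
  "('m \<Rightarrow> real) set \<Rightarrow> ('m \<Rightarrow> 'm) \<Rightarrow> (('m \<Rightarrow> real) \<Rightarrow> 'a::real_vector \<Rightarrow> 'a) \<Rightarrow> 'a set
   \<Rightarrow> ('a \<Rightarrow> 'a) \<Rightarrow> ('a \<Rightarrow> 'a \<Rightarrow> 'a) \<Rightarrow> ('a \<Rightarrow> ('m \<Rightarrow> real) \<Rightarrow> ('m \<Rightarrow> real)) \<Rightarrow> bool" where
  "hom_Lie_algebroid Cs \<phi> sm G phiA br a \<longleftrightarrow>
     hom_bundle Cs \<phi> sm G phiA \<and> hom_Lie_algebra G phiA br \<and> anchor_map Cs \<phi> sm G a \<and>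
     (\<forall>X\<in>G. \<forall>Y\<in>G. \<forall>f\<in>Cs. br X (sm f Y) = sm (pb \<phi> f) (br X Y) + sm (a (phiA X) f) (phiA Y)) \<and>
     (\<forall>X\<in>G. \<forall>f\<in>Cs. pb \<phi> (a X f) = a (phiA X) (pb \<phi> f)) \<and>
     (\<forall>X\<in>G. \<forall>Y\<in>G. \<forall>f\<in>Cs. a (br X Y) (pb \<phi> f) = a (phiA X) (a Y f) - a (phiA Y) (a X f))"

definition pseudo_metric ::
  "('m \<Rightarrow> real) set \<Rightarrow> ('m \<Rightarrow> 'm) \<Rightarrow> (('m \<Rightarrow> real) \<Rightarrow> 'a::real_vector \<Rightarrow> 'a) \<Rightarrow> 'a set
   \<Rightarrow> ('a \<Rightarrow> 'a) \<Rightarrow> ('a \<Rightarrow> 'a \<Rightarrow> ('m \<Rightarrow> real)) \<Rightarrow> bool" where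
  "pseudo_metric Cs \<phi> sm G phiA g \<longleftrightarrow>
     (\<forall>X\<in>G. \<forall>Y\<in>G. g X Y \<in> Cs) \<and>
     (\<forall>X\<in>G. \<forall>Y\<in>G. g X Y = g Y X) \<and>
     (\<forall>X\<in>G. \<forall>Y\<in>G. \<forall>Z\<in>G. g (X + Y) Z = g X Z + g Y Z) \<and>
     (\<forall>X\<in>G. \<forall>Y\<in>G. \<forall>f\<in>Cs. g (sm f X) Y = f * g X Y) \<and>
     (\<forall>X\<in>G. (\<forall>Y\<in>G. g X Y = 0) \<longrightarrow> X = 0) \<and>
     (\<forall>X\<in>G. \<forall>Y\<in>G. g (phiA X) (phiA Y) = pb \<phi> (g X Y))"

definition hom_Levi_Civita ::
  "('m \<Rightarrow> real) set \<Rightarrow> ('m \<Rightarrow> 'm) \<Rightarrow> (('m \<Rightarrow> real) \<Rightarrow> 'a::real_vector \<Rightarrow> 'a) \<Rightarrow> 'a set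
   \<Rightarrow> ('a \<Rightarrow> 'a) \<Rightarrow> ('a \<Rightarrow> 'a \<Rightarrow> 'a) \<Rightarrow> ('a \<Rightarrow> ('m \<Rightarrow> real) \<Rightarrow> ('m \<Rightarrow> real))
   \<Rightarrow> ('a \<Rightarrow> 'a \<Rightarrow> ('m \<Rightarrow> real)) \<Rightarrow> ('a \<Rightarrow> 'a \<Rightarrow> 'a) \<Rightarrow> bool" where
  "hom_Levi_Civita Cs \<phi> sm G phiA br a g nabla \<longleftrightarrow>
     (\<forall>X\<in>G. \<forall>Y\<in>G. nabla X Y \<in> G) \<and>
     (\<forall>X\<in>G. real_linear_on G (nabla X)) \<and>
     (\<forall>X\<in>G. \<forall>Y\<in>G. \<forall>Z\<in>G. nabla (X + Y) Z = nabla X Z + nabla Y Z) \<and>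
     (\<forall>X\<in>G. \<forall>Y\<in>G. \<forall>f\<in>Cs. nabla (sm f X) Y = sm (pb \<phi> f) (nabla X Y)) \<and>
     (\<forall>X\<in>G. \<forall>Y\<in>G. \<forall>f\<in>Cs.
        nabla X (sm f Y) = sm (pb \<phi> f) (nabla X Y) + sm (a (phiA X) f) (phiA Y)) \<and>
     (\<forall>X\<in>G. \<forall>Y\<in>G. br X Y = nabla X Y - nabla Y X) \<and>
     (\<forall>X\<in>G. \<forall>Y\<in>G. \<forall>Z\<in>G.
        a (phiA X) (g Y Z) = g (nabla X Y) (phiA Z) + g (phiA Y) (nabla X Z))"

text \<open>Almost para-complex structure K (phi_A o K is a bundle endomorphism, i.e. Cs-linear).\<close>
definition almost_para_complex ::
  "('m \<Rightarrow> real) set \<Rightarrow> (('m \<Rightarrow> real) \<Rightarrow> 'a::real_vector \<Rightarrow> 'a) \<Rightarrow> 'a set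
   \<Rightarrow> ('a \<Rightarrow> 'a) \<Rightarrow> ('a \<Rightarrow> 'a) \<Rightarrow> bool" where
  "almost_para_complex Cs sm G phiA K \<longleftrightarrow>
     bij_betw K G G \<and>
     (\<forall>X\<in>G. phiA (K (phiA (K X))) = X) \<and>
     (\<forall>X\<in>G. phiA (K X) = K (phiA X)) \<and>
     (\<forall>X\<in>G. \<forall>Y\<in>G. phiA (K (X + Y)) = phiA (K X) + phiA (K Y)) \<and>
     (\<forall>X\<in>G. \<forall>f\<in>Cs. phiA (K (sm f X)) = sm f (phiA (K X)))"

definition eigen_sections :: "'a::real_vector set \<Rightarrow> ('a \<Rightarrow> 'a) \<Rightarrow> ('a \<Rightarrow> 'a) \<Rightarrow> real \<Rightarrow> 'a set" where
  "eigen_sections G phiA K \<epsilon> = {X \<in> G. phiA (K X) = \<epsilon> *\<^sub>R X}"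

definition para_Kaehler_hom_Lie_algebroid ::
  "('m \<Rightarrow> real) set \<Rightarrow> ('m \<Rightarrow> 'm) \<Rightarrow> (('m \<Rightarrow> real) \<Rightarrow> 'a::real_vector \<Rightarrow> 'a) \<Rightarrow> 'a set
   \<Rightarrow> ('a \<Rightarrow> 'a) \<Rightarrow> ('a \<Rightarrow> 'a \<Rightarrow> 'a) \<Rightarrow> ('a \<Rightarrow> ('m \<Rightarrow> real) \<Rightarrow> ('m \<Rightarrow> real))
   \<Rightarrow> ('a \<Rightarrow> 'a) \<Rightarrow> ('a \<Rightarrow> 'a \<Rightarrow> ('m \<Rightarrow> real)) \<Rightarrow> ('a \<Rightarrow> 'a \<Rightarrow> 'a) \<Rightarrow> bool" where
  "para_Kaehler_hom_Lie_algebroid Cs \<phi> sm G phiA br a K g nabla \<longleftrightarrow>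
     function_algebra Cs \<and> diffeo_on Cs \<phi> \<and>
     hom_Lie_algebroid Cs \<phi> sm G phiA br a \<and>
     pseudo_metric Cs \<phi> sm G phiA g \<and>
     almost_para_complex Cs sm G phiA K \<and>
     (\<forall>X\<in>G. \<forall>Y\<in>G. g (phiA (K X)) (phiA (K Y)) = - g X Y) \<and>
     hom_Levi_Civita Cs \<phi> sm G phiA br a g nabla \<and>
     (\<forall>X\<in>G. \<forall>Y\<in>G. nabla X (phiA (K Y)) = phiA (K (nabla X Y)))"

end

theory Submission
  imports Defs
begin



locale pk =
  fixes Cs :: "('m \<Rightarrow> real) set" and ph :: "'m \<Rightarrow> 'm"
    and sm :: "('m \<Rightarrow> real) \<Rightarrow> 'a::real_vector \<Rightarrow> 'a" and G :: "'a set"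
    and phiA K :: "'a \<Rightarrow> 'a" and br nabla nablaa :: "'a \<Rightarrow> 'a \<Rightarrow> 'a"
    and a :: "'a \<Rightarrow> ('m \<Rightarrow> real) \<Rightarrow> ('m \<Rightarrow> real)"
    and g Om :: "'a \<Rightarrow> 'a \<Rightarrow> ('m \<Rightarrow> real)" and ep :: real
  assumes pK: "para_Kaehler_hom_Lie_algebroid Cs ph sm G phiA br a K g nabla"
    and Omega_def: "\<And>X Y. Om X Y = g (phiA (K X)) Y"
    and nablaa_sec: "\<forall>X\<in>G. \<forall>Y\<in>G. nablaa X Y \<in> G"
    and nablaa_def: "\<forall>X\<in>G. \<forall>Y\<in>G. \<forall>Z\<in>G.
          Om (nablaa X Y) (phiA Z) = a (phiA X) (Om Y Z) - Om (phiA Y) (br X Z)"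
    and eps: "ep = 1 \<or> ep = -1"
begin

abbreviation J where "J X \<equiv> phiA (K X)"
abbreviation E where "E \<equiv> eigen_sections G phiA K ep"

lemma parts: "function_algebra Cs" "diffeo_on Cs ph" "hom_Lie_algebroid Cs ph sm G phiA br a"
  "pseudo_metric Cs ph sm G phiA g" "almost_para_complex Cs sm G phiA K"
  "\<forall>X\<in>G. \<forall>Y\<in>G. g (J X) (J Y) = - g X Y"
  "hom_Levi_Civita Cs ph sm G phiA br a g nabla"
  "\<forall>X\<in>G. \<forall>Y\<in>G. nabla X (J Y) = J (nabla X Y)"
  using pK unfolding para_Kaehler_hom_Lie_algebroid_def by auto

lemma const_in: "(\<lambda>_. c) \<in> Cs" using parts(1) unfolding function_algebra_def by auto
lemma Cs_ops: "f \<in> Cs \<Longrightarrow> h \<in> Cs \<Longrightarrow> f + h \<in> Cs \<and> f * h \<in> Cs \<and> - f \<in> Cs"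
  using parts(1) unfolding function_algebra_def by auto
lemma Cs_minus: "f \<in> Cs \<Longrightarrow> h \<in> Cs \<Longrightarrow> f - h \<in> Cs"
proof -
  assume "f \<in> Cs" "h \<in> Cs"
  then have "- h \<in> Cs" using Cs_ops[of h h] by blast
  then have "f + - h \<in> Cs" using Cs_ops[of f "- h"] \<open>f \<in> Cs\<close> by blast
  then show ?thesis by (simp only: diff_conv_add_uminus)
qed

lemma hb: "hom_bundle Cs ph sm G phiA" and hla: "hom_Lie_algebra G phiA br"
  and am: "anchor_map Cs ph sm G a"
  and algd: "\<forall>X\<in>G. \<forall>Y\<in>G. \<forall>f\<in>Cs. br X (sm f Y) = sm (pb ph f) (br X Y) + sm (a (phiA X) f) (phiA Y)"
    "\<forall>X\<in>G. \<forall>f\<in>Cs. pb ph (a X f) = a (phiA X) (pb ph f)"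
    "\<forall>X\<in>G. \<forall>Y\<in>G. \<forall>f\<in>Cs. a (br X Y) (pb ph f) = a (phiA X) (a Y f) - a (phiA Y) (a X f)"
  using parts(3) unfolding hom_Lie_algebroid_def by auto

lemma secm: "sec_module Cs sm G" using hb unfolding hom_bundle_def by auto

lemma G0: "0 \<in> G" and Gadd: "X \<in> G \<Longrightarrow> Y \<in> G \<Longrightarrow> X + Y \<in> G"
  and Gsm: "X \<in> G \<Longrightarrow> f \<in> Cs \<Longrightarrow> sm f X \<in> G"
  and smc: "X \<in> G \<Longrightarrow> sm (\<lambda>_. c) X = c *\<^sub>R X"
  using secm unfolding sec_module_def by auto

lemma Gscale: "X \<in> G \<Longrightarrow> c *\<^sub>R X \<in> G"
  using Gsm[OF _ const_in, of X c] smc[of X c] by simp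
lemma Gminus: "X \<in> G \<Longrightarrow> Y \<in> G \<Longrightarrow> X - Y \<in> G"
  using Gadd[of X "(-1) *\<^sub>R Y"] Gscale[of Y "-1"] by simp
lemma Guminus: "X \<in> G \<Longrightarrow> - X \<in> G"
  using Gscale[of X "-1"] by simp

lemma phi_bij: "bij_betw phiA G G" and phi_lin: "real_linear_on G phiA"
  and phi_sm: "X \<in> G \<Longrightarrow> f \<in> Cs \<Longrightarrow> phiA (sm f X) = sm (pb ph f) (phiA X)"
  using hb unfolding hom_bundle_def by auto

lemma phiG: "X \<in> G \<Longrightarrow> phiA X \<in> G" using phi_bij by (rule bij_betw_apply)
lemma phi_inj: "X \<in> G \<Longrightarrow> Y \<in> G \<Longrightarrow> phiA X = phiA Y \<Longrightarrow> X = Y"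
  using inj_onD[OF bij_betw_imp_inj_on[OF phi_bij]] by blast
lemma phi_surj: "Y \<in> G \<Longrightarrow> \<exists>X\<in>G. Y = phiA X"
  using phi_bij bij_betw_imp_surj_on by blast
lemma phi_add: "X \<in> G \<Longrightarrow> Y \<in> G \<Longrightarrow> phiA (X + Y) = phiA X + phiA Y"
  and phi_scale: "X \<in> G \<Longrightarrow> phiA (c *\<^sub>R X) = c *\<^sub>R phiA X"
  using phi_lin unfolding real_linear_on_def by auto
lemma phi_diff: "X \<in> G \<Longrightarrow> Y \<in> G \<Longrightarrow> phiA (X - Y) = phiA X - phiA Y"
proof -
  assume "X \<in> G" "Y \<in> G"
  then have "phiA (X + (-1) *\<^sub>R Y) = phiA X + (-1) *\<^sub>R phiA Y"
    using phi_add[of X "(-1) *\<^sub>R Y"] phi_scale[of Y "-1"] Gscale[of Y "-1"] by simp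
  then show ?thesis by simp
qed

lemma apc: "bij_betw K G G" "\<forall>X\<in>G. J (J X) = X" "\<forall>X\<in>G. phiA (K X) = K (phiA X)"
  "\<forall>X\<in>G. \<forall>Y\<in>G. J (X + Y) = J X + J Y" "\<forall>X\<in>G. \<forall>f\<in>Cs. J (sm f X) = sm f (J X)"
  using parts(5) unfolding almost_para_complex_def by auto

lemma KG: "X \<in> G \<Longrightarrow> K X \<in> G" using apc(1) by (rule bij_betw_apply)
lemma JG: "X \<in> G \<Longrightarrow> J X \<in> G" using KG phiG by blast
lemma JJ: "X \<in> G \<Longrightarrow> J (J X) = X" using apc(2) by blast
lemma J_add: "X \<in> G \<Longrightarrow> Y \<in> G \<Longrightarrow> J (X + Y) = J X + J Y" using apc(4) by blast
lemma J_sm: "X \<in> G \<Longrightarrow> f \<in> Cs \<Longrightarrow> J (sm f X) = sm f (J X)" using apc(5) by blast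
lemma J_scale: "X \<in> G \<Longrightarrow> J (c *\<^sub>R X) = c *\<^sub>R J X"
  using J_sm[OF _ const_in, of X c] smc[of X c] smc[OF JG, of X c] by simp
lemma J_diff: "X \<in> G \<Longrightarrow> Y \<in> G \<Longrightarrow> J (X - Y) = J X - J Y"
proof -
  assume "X \<in> G" "Y \<in> G"
  then have "J (X + (-1) *\<^sub>R Y) = J X + (-1) *\<^sub>R J Y"
    using J_add[of X "(-1) *\<^sub>R Y"] J_scale[of Y "-1"] Gscale[of Y "-1"] by simp
  then show ?thesis by simp
qed
lemma J0: "J 0 = 0" using J_scale[OF G0, of 0] by simp
lemma J_phi: "X \<in> G \<Longrightarrow> J (phiA X) = phiA (J X)"
  using apc(3) by simp

lemma pm: "\<forall>X\<in>G. \<forall>Y\<in>G. g X Y \<in> Cs"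
  "\<forall>X\<in>G. \<forall>Y\<in>G. g X Y = g Y X"
  "\<forall>X\<in>G. \<forall>Y\<in>G. \<forall>Z\<in>G. g (X + Y) Z = g X Z + g Y Z"
  "\<forall>X\<in>G. \<forall>Y\<in>G. \<forall>f\<in>Cs. g (sm f X) Y = f * g X Y"
  "\<forall>X\<in>G. (\<forall>Y\<in>G. g X Y = 0) \<longrightarrow> X = 0"
  "\<forall>X\<in>G. \<forall>Y\<in>G. g (phiA X) (phiA Y) = pb ph (g X Y)"
  using parts(4) unfolding pseudo_metric_def by auto

lemma gCs: "X \<in> G \<Longrightarrow> Y \<in> G \<Longrightarrow> g X Y \<in> Cs" using pm by blast
lemma gsym: "X \<in> G \<Longrightarrow> Y \<in> G \<Longrightarrow> g X Y = g Y X" using pm by blast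
lemma gadd: "X \<in> G \<Longrightarrow> Y \<in> G \<Longrightarrow> Z \<in> G \<Longrightarrow> g (X + Y) Z = g X Z + g Y Z" using pm by blast
lemma gsm: "X \<in> G \<Longrightarrow> Y \<in> G \<Longrightarrow> f \<in> Cs \<Longrightarrow> g (sm f X) Y = f * g X Y" using pm by blast
lemma gnd: "X \<in> G \<Longrightarrow> (\<And>Y. Y \<in> G \<Longrightarrow> g X Y = 0) \<Longrightarrow> X = 0" using pm by blast
lemma gphi: "X \<in> G \<Longrightarrow> Y \<in> G \<Longrightarrow> g (phiA X) (phiA Y) = pb ph (g X Y)" using pm by blast
lemma gJJ: "X \<in> G \<Longrightarrow> Y \<in> G \<Longrightarrow> g (J X) (J Y) = - g X Y" using parts(6) by blast

lemma gscale: "X \<in> G \<Longrightarrow> Y \<in> G \<Longrightarrow> g (c *\<^sub>R X) Y = (\<lambda>_. c) * g X Y"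
  using gsm[OF _ _ const_in, of X Y c] smc[of X c] by simp
lemma gdiff: "X \<in> G \<Longrightarrow> Y \<in> G \<Longrightarrow> Z \<in> G \<Longrightarrow> g (X - Y) Z = g X Z - g Y Z"
proof -
  assume a1: "X \<in> G" "Y \<in> G" "Z \<in> G"
  then have "g (X + (-1) *\<^sub>R Y) Z = g X Z + (\<lambda>_. -1) * g Y Z"
    using gadd[of X "(-1) *\<^sub>R Y" Z] gscale[of Y Z "-1"] Gscale[of Y "-1"] by simp
  moreover have "(\<lambda>_. -1::real) * g Y Z = - g Y Z" by (rule ext) simp
  ultimately show ?thesis by simp
qed
lemma gdiff2: "X \<in> G \<Longrightarrow> Y \<in> G \<Longrightarrow> Z \<in> G \<Longrightarrow> g Z (X - Y) = g Z X - g Z Y"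
  using gdiff[of X Y Z] gsym[of Z "X - Y"] gsym[of Z X] gsym[of Z Y] Gminus[of X Y] by simp
lemma gadd2: "X \<in> G \<Longrightarrow> Y \<in> G \<Longrightarrow> Z \<in> G \<Longrightarrow> g Z (X + Y) = g Z X + g Z Y"
  using gadd[of X Y Z] gsym[of Z "X + Y"] gsym[of Z X] gsym[of Z Y] Gadd[of X Y] by simp
lemma gscale2: "X \<in> G \<Longrightarrow> Y \<in> G \<Longrightarrow> g Y (c *\<^sub>R X) = (\<lambda>_. c) * g Y X"
  using gscale[of X Y c] gsym[of Y "c *\<^sub>R X"] gsym[of Y X] Gscale[of X c] by simp

end


context pk begin

lemma sm_mult: "X \<in> G \<Longrightarrow> f \<in> Cs \<Longrightarrow> h \<in> Cs \<Longrightarrow> sm (f * h) X = sm f (sm h X)"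
  using secm unfolding sec_module_def by blast

lemma OmJ: "Om X Y = g (J X) Y" using Omega_def by simp
lemma OmCs: "X \<in> G \<Longrightarrow> Y \<in> G \<Longrightarrow> Om X Y \<in> Cs" by (simp add: OmJ gCs JG)
lemma Om_diff1: "X \<in> G \<Longrightarrow> Y \<in> G \<Longrightarrow> Z \<in> G \<Longrightarrow> Om (X - Y) Z = Om X Z - Om Y Z"
  by (simp add: OmJ J_diff gdiff JG)
lemma Om_diff2: "X \<in> G \<Longrightarrow> Y \<in> G \<Longrightarrow> Z \<in> G \<Longrightarrow> Om Z (X - Y) = Om Z X - Om Z Y"
  by (simp add: OmJ gdiff2 JG)
lemma Om_add2: "X \<in> G \<Longrightarrow> Y \<in> G \<Longrightarrow> Z \<in> G \<Longrightarrow> Om Z (X + Y) = Om Z X + Om Z Y"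
  by (simp add: OmJ gadd2 JG)
lemma Om_phi: "X \<in> G \<Longrightarrow> Y \<in> G \<Longrightarrow> Om (phiA X) (phiA Y) = pb ph (Om X Y)"
  by (simp add: OmJ J_phi gphi JG)
lemma Om_nd: assumes "U \<in> G" "\<And>Z. Z \<in> G \<Longrightarrow> Om U (phiA Z) = 0" shows "U = 0"
proof -
  have "J U = 0"
  proof (rule gnd)
    show "J U \<in> G" using assms JG by blast
    fix Y assume "Y \<in> G"
    then obtain Z where "Z \<in> G" "Y = phiA Z" using phi_surj by blast
    then show "g (J U) Y = 0" using assms(2) by (simp add: OmJ)
  qed
  then show ?thesis using JJ[OF assms(1)] J0 by simp
qed
lemma Om_nd2: assumes "U \<in> G" "\<And>W. W \<in> G \<Longrightarrow> Om U (phiA (phiA W)) = 0" shows "U = 0"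
proof (rule Om_nd[OF assms(1)])
  fix Z assume "Z \<in> G"
  then obtain W where "W \<in> G" "Z = phiA W" using phi_surj by blast
  then show "Om U (phiA Z) = 0" using assms(2) by simp
qed

lemma memE: "X \<in> E \<longleftrightarrow> X \<in> G \<and> J X = ep *\<^sub>R X"
  unfolding eigen_sections_def by simp
lemma ep2: "ep * ep = 1" using eps by auto

lemma iso_g: assumes "X \<in> E" "Y \<in> E" shows "g X Y = 0"
proof -
  have G: "X \<in> G" "Y \<in> G" using assms memE by auto
  have "g (J X) (J Y) = g (ep *\<^sub>R X) (ep *\<^sub>R Y)" using assms memE by simp
  also have "\<dots> = (\<lambda>_. ep) * ((\<lambda>_. ep) * g X Y)" using G by (simp add: gscale gscale2 Gscale)
  also have "\<dots> = g X Y" using ep2 by (intro ext) (simp add: mult.assoc[symmetric])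
  finally have "g X Y = - g X Y" using gJJ G by simp
  then show ?thesis by (simp add: fun_eq_iff)
qed
lemma iso: assumes "X \<in> E" "Y \<in> E" shows "Om X Y = 0"
proof -
  have G: "X \<in> G" "Y \<in> G" using assms memE by auto
  have "Om X Y = g (ep *\<^sub>R X) Y" using OmJ assms memE by simp
  also have "\<dots> = 0" using gscale G iso_g assms by simp
  finally show ?thesis .
qed

lemma EG: "X \<in> E \<Longrightarrow> X \<in> G" using memE by simp
lemma E_phi: "X \<in> E \<Longrightarrow> phiA X \<in> E"
  by (simp add: memE J_phi phiG phi_scale)
lemma E_phi_surj: assumes "Y \<in> E" shows "\<exists>X\<in>E. Y = phiA X"
proof -
  obtain X where X: "X \<in> G" "Y = phiA X" using phi_surj assms EG by blast
  have "phiA (J X) = phiA (ep *\<^sub>R X)"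
    using J_phi[OF X(1)] assms X by (simp add: memE phi_scale)
  then have "J X = ep *\<^sub>R X" using phi_inj JG Gscale X by blast
  then show ?thesis using X memE by blast
qed
lemma E0: "0 \<in> E" using memE G0 J0 by simp
lemma E_add: "X \<in> E \<Longrightarrow> Y \<in> E \<Longrightarrow> X + Y \<in> E"
  using memE Gadd J_add by (simp add: scaleR_add_right)
lemma E_diff: "X \<in> E \<Longrightarrow> Y \<in> E \<Longrightarrow> X - Y \<in> E"
  using memE Gminus J_diff by (simp add: scaleR_diff_right)
lemma E_sm: "X \<in> E \<Longrightarrow> f \<in> Cs \<Longrightarrow> sm f X \<in> E"
proof -
  assume a1: "X \<in> E" "f \<in> Cs"
  then have "J (sm f X) = sm f (ep *\<^sub>R X)" using memE J_sm by simp
  also have "\<dots> = sm f (sm (\<lambda>_. ep) X)" using smc a1 EG by simp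
  also have "\<dots> = sm (f * (\<lambda>_. ep)) X" using sm_mult a1 EG const_in by simp
  also have "\<dots> = sm ((\<lambda>_. ep) * f) X" by (simp add: mult.commute)
  also have "\<dots> = sm (\<lambda>_. ep) (sm f X)" using sm_mult a1 EG const_in by simp
  also have "\<dots> = ep *\<^sub>R sm f X" using smc Gsm a1 EG by blast
  finally show ?thesis using memE Gsm a1 EG by blast
qed

lemma LC: "\<forall>X\<in>G. \<forall>Y\<in>G. nabla X Y \<in> G"
  "\<forall>X\<in>G. real_linear_on G (nabla X)"
  "\<forall>X\<in>G. \<forall>Y\<in>G. br X Y = nabla X Y - nabla Y X"
  "\<forall>X\<in>G. \<forall>Y\<in>G. \<forall>Z\<in>G. a (phiA X) (g Y Z) = g (nabla X Y) (phiA Z) + g (phiA Y) (nabla X Z)"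
  using parts(7) unfolding hom_Levi_Civita_def by auto
lemma nG: "X \<in> G \<Longrightarrow> Y \<in> G \<Longrightarrow> nabla X Y \<in> G" using LC by blast
lemma n_scale: "X \<in> G \<Longrightarrow> Y \<in> G \<Longrightarrow> nabla X (c *\<^sub>R Y) = c *\<^sub>R nabla X Y"
  using LC(2) unfolding real_linear_on_def by blast
lemma n_tors: "X \<in> G \<Longrightarrow> Y \<in> G \<Longrightarrow> br X Y = nabla X Y - nabla Y X" using LC by blast
lemma n_comp: "X \<in> G \<Longrightarrow> Y \<in> G \<Longrightarrow> Z \<in> G \<Longrightarrow> a (phiA X) (g Y Z) = g (nabla X Y) (phiA Z) + g (phiA Y) (nabla X Z)"
  using LC by blast
lemma nJ: "X \<in> G \<Longrightarrow> Y \<in> G \<Longrightarrow> nabla X (J Y) = J (nabla X Y)" using parts(8) by blast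
lemma n_E: assumes "X \<in> G" "Y \<in> E" shows "nabla X Y \<in> E"
proof -
  have Y: "Y \<in> G" "J Y = ep *\<^sub>R Y" using assms memE by auto
  have "J (nabla X Y) = nabla X (J Y)" using nJ[OF assms(1) Y(1)] by simp
  also have "\<dots> = ep *\<^sub>R nabla X Y" using Y assms(1) n_scale by simp
  finally show ?thesis using memE nG assms(1) Y by simp
qed
lemma brE: "X \<in> E \<Longrightarrow> Y \<in> E \<Longrightarrow> br X Y \<in> E"
  by (simp add: n_tors n_E E_diff EG)
lemma brG: "X \<in> G \<Longrightarrow> Y \<in> G \<Longrightarrow> br X Y \<in> G"
  by (simp add: n_tors nG Gminus)

lemma Om_comp: "X \<in> G \<Longrightarrow> Y \<in> G \<Longrightarrow> Z \<in> G \<Longrightarrow>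
   a (phiA X) (Om Y Z) = Om (nabla X Y) (phiA Z) + Om (phiA Y) (nabla X Z)"
  by (simp add: OmJ n_comp JG nJ J_phi)

lemma key1: assumes "X \<in> E" "Y \<in> E" shows "nablaa X Y = nabla X Y"
proof -
  have G: "X \<in> G" "Y \<in> G" using assms EG by auto
  show ?thesis
  proof -
    have "nablaa X Y - nabla X Y = 0"
    proof (rule Om_nd)
      show "nablaa X Y - nabla X Y \<in> G" using G nablaa_sec nG Gminus by blast
      fix Z assume Z: "Z \<in> G"
      have e1: "Om (nablaa X Y) (phiA Z) = a (phiA X) (Om Y Z) - Om (phiA Y) (br X Z)"
        using nablaa_def G Z by blast
      have e2: "Om (phiA Y) (br X Z) = Om (phiA Y) (nabla X Z) - Om (phiA Y) (nabla Z X)"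
        using G Z by (simp add: n_tors Om_diff2 nG phiG)
      have e3: "Om (phiA Y) (nabla Z X) = 0" using iso E_phi n_E assms Z by blast
      have e4: "a (phiA X) (Om Y Z) = Om (nabla X Y) (phiA Z) + Om (phiA Y) (nabla X Z)"
        using Om_comp G Z by blast
      show "Om (nablaa X Y - nabla X Y) (phiA Z) = 0"
        using Om_diff1 G Z nablaa_sec nG phiG e1 e2 e3 e4 by simp
    qed
    then show ?thesis by simp
  qed
qed

end


context pk begin

lemma aD: "X \<in> G \<Longrightarrow> phi_derivation Cs ph (a X)"
  and a_addX: "X \<in> G \<Longrightarrow> Y \<in> G \<Longrightarrow> f \<in> Cs \<Longrightarrow> a (X + Y) f = a X f + a Y f"
  and a_smX: "X \<in> G \<Longrightarrow> h \<in> Cs \<Longrightarrow> f \<in> Cs \<Longrightarrow> a (sm h X) f = h * a X f"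
  using am unfolding anchor_map_def by auto

lemma aCs: "X \<in> G \<Longrightarrow> f \<in> Cs \<Longrightarrow> a X f \<in> Cs"
  using aD unfolding phi_derivation_def by blast
lemma a_difff: assumes "X \<in> G" "f \<in> Cs" "h \<in> Cs" shows "a X (f - h) = a X f - a X h"
proof -
  have d: "phi_derivation Cs ph (a X)" using aD assms by blast
  have m: "- h = (\<lambda>_. -1) * h" by (rule ext) simp
  have mh: "- h \<in> Cs" using Cs_ops assms by blast
  have c3: "\<forall>f\<in>Cs. \<forall>c. a X ((\<lambda>_. c) * f) = (\<lambda>_. c) * a X f"
    using d unfolding phi_derivation_def by blast
  have "a X (- h) = (\<lambda>_. -1) * a X h" unfolding m using c3 assms(3) by blast
  also have "\<dots> = - a X h" by (rule ext) simp
  finally have "a X (- h) = - a X h" .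
  have "a X (f - h) = a X (f + - h)" by (simp only: diff_conv_add_uminus)
  also have "\<dots> = a X f + a X (- h)" using d assms(2) mh unfolding phi_derivation_def by blast
  also have "\<dots> = a X f - a X h" using \<open>a X (- h) = - a X h\<close> by simp
  finally show ?thesis .
qed
lemma a_diffX: assumes "X \<in> G" "Y \<in> G" "f \<in> Cs" shows "a (X - Y) f = a X f - a Y f"
proof -
  have s: "sm (\<lambda>_. -1) Y = - Y" using smc assms(2) by simp
  have "a (X + sm (\<lambda>_. -1) Y) f = a X f + (\<lambda>_. -1) * a Y f"
    using a_addX[of X "sm (\<lambda>_. -1) Y" f] a_smX[of Y "\<lambda>_. -1" f] assms Gsm const_in by simp
  also have "(\<lambda>_. -1) * a Y f = - a Y f" by (rule ext) simp
  finally show ?thesis using s by (simp add: fun_eq_iff)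
qed

lemma pb_diff: "pb ph (f - h) = pb ph f - pb ph h"
  unfolding pb_def by (rule ext) simp

lemma hlaG: "\<forall>X\<in>G. \<forall>Y\<in>G. br X Y \<in> G" "\<forall>X\<in>G. real_linear_on G (br X)"
  "\<forall>X\<in>G. \<forall>Y\<in>G. br X Y = - br Y X"
  "\<forall>X\<in>G. \<forall>Y\<in>G. phiA (br X Y) = br (phiA X) (phiA Y)"
  "\<forall>X\<in>G. \<forall>Y\<in>G. \<forall>Z\<in>G. br (phiA X) (br Y Z) + br (phiA Y) (br Z X) + br (phiA Z) (br X Y) = 0"
  using hla unfolding hom_Lie_algebra_def by blast+

lemma br_add2: "X \<in> G \<Longrightarrow> Y \<in> G \<Longrightarrow> Z \<in> G \<Longrightarrow> br X (Y + Z) = br X Y + br X Z"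
  and br_scale2: "X \<in> G \<Longrightarrow> Y \<in> G \<Longrightarrow> br X (c *\<^sub>R Y) = c *\<^sub>R br X Y"
  using hlaG(2) unfolding real_linear_on_def by auto
lemma br_skew: "X \<in> G \<Longrightarrow> Y \<in> G \<Longrightarrow> br X Y = - br Y X" using hlaG(3) by blast
lemma br_phi: "X \<in> G \<Longrightarrow> Y \<in> G \<Longrightarrow> phiA (br X Y) = br (phiA X) (phiA Y)" using hlaG(4) by blast
lemma jac: "X \<in> G \<Longrightarrow> Y \<in> G \<Longrightarrow> Z \<in> G \<Longrightarrow> br (phiA X) (br Y Z) + br (phiA Y) (br Z X) + br (phiA Z) (br X Y) = 0"
  using hlaG(5) by blast
lemma br_diff2: assumes "X \<in> G" "Y \<in> G" "Z \<in> G" shows "br X (Y - Z) = br X Y - br X Z"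
proof -
  have "br X (Y + (-1) *\<^sub>R Z) = br X Y + (-1) *\<^sub>R br X Z"
    using br_add2[of X Y "(-1) *\<^sub>R Z"] br_scale2[of X Z "-1"] Gscale[of Z "-1"] assms by simp
  then show ?thesis by simp
qed
lemma br_diff1: assumes "X \<in> G" "Y \<in> G" "Z \<in> G" shows "br (X - Y) Z = br X Z - br Y Z"
proof -
  have "br (X - Y) Z = - br Z (X - Y)" using br_skew[of "X - Y" Z] Gminus assms by blast
  also have "\<dots> = - (br Z X - br Z Y)" using br_diff2 assms by simp
  also have "\<dots> = br X Z - br Y Z" using br_skew[of X Z] br_skew[of Y Z] assms by simp
  finally show ?thesis .
qed

lemma naG: "X \<in> G \<Longrightarrow> Y \<in> G \<Longrightarrow> nablaa X Y \<in> G" using nablaa_sec by blast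
lemma nad: "X \<in> G \<Longrightarrow> Y \<in> G \<Longrightarrow> Z \<in> G \<Longrightarrow>
   Om (nablaa X Y) (phiA Z) = a (phiA X) (Om Y Z) - Om (phiA Y) (br X Z)"
  using nablaa_def by blast

lemma naEQ: assumes "Y \<in> G" "Z \<in> G" shows "phiA (nablaa Y Z) = nablaa (phiA Y) (phiA Z)"
proof -
  have "nablaa (phiA Y) (phiA Z) - phiA (nablaa Y Z) = 0"
  proof (rule Om_nd2)
    show "nablaa (phiA Y) (phiA Z) - phiA (nablaa Y Z) \<in> G"
      using assms naG phiG Gminus by simp
    fix W assume W: "W \<in> G"
    have f: "Om Z W \<in> Cs" "Om (phiA Z) (br Y W) \<in> Cs" using OmCs assms W phiG brG by auto
    have "Om (nablaa (phiA Y) (phiA Z)) (phiA (phiA W))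
       = a (phiA (phiA Y)) (Om (phiA Z) (phiA W)) - Om (phiA (phiA Z)) (br (phiA Y) (phiA W))"
      using nad assms W phiG by simp
    also have "\<dots> = a (phiA (phiA Y)) (pb ph (Om Z W)) - Om (phiA (phiA Z)) (phiA (br Y W))"
      using Om_phi br_phi assms W by simp
    also have "\<dots> = pb ph (a (phiA Y) (Om Z W)) - pb ph (Om (phiA Z) (br Y W))"
      using algd(2) f Om_phi assms W phiG brG by simp
    also have "\<dots> = pb ph (Om (nablaa Y Z) (phiA W))"
      using nad assms W pb_diff by simp
    also have "\<dots> = Om (phiA (nablaa Y Z)) (phiA (phiA W))"
      using Om_phi naG assms W phiG by simp
    finally show "Om (nablaa (phiA Y) (phiA Z) - phiA (nablaa Y Z)) (phiA (phiA W)) = 0"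
      using Om_diff1 naG phiG assms W by simp
  qed
  then show ?thesis by simp
qed

lemma T1: assumes "U \<in> G" "Z \<in> G" "W \<in> G"
  shows "Om (nablaa U (phiA Z)) (phiA (phiA W))
     = a (phiA U) (pb ph (Om Z W)) - Om (phiA (phiA Z)) (br U (phiA W))"
  using nad[of U "phiA Z" "phiA W"] Om_phi assms phiG by simp

lemma sub4: fixes p q r t :: "'b::ab_group_add" shows "(p - q) - (r - t) = p - q - r + t"
  by (simp add: algebra_simps)

lemma T2: assumes "X \<in> G" "Y \<in> G" "Z \<in> G" "W \<in> G"
  shows "Om (nablaa (phiA X) (nablaa Y Z)) (phiA (phiA W))
     = a (phiA (phiA X)) (a (phiA Y) (Om Z W)) - a (phiA (phiA X)) (Om (phiA Z) (br Y W))
       - a (phiA (phiA Y)) (Om (phiA Z) (br X W)) + Om (phiA (phiA Z)) (br (phiA Y) (br X W))"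
proof -
  have G: "phiA X \<in> G" "phiA Y \<in> G" "phiA Z \<in> G" "phiA W \<in> G" "nablaa Y Z \<in> G"
    "br X W \<in> G" "br Y W \<in> G" "phiA (phiA X) \<in> G"
    using assms phiG naG brG by auto
  have f: "a (phiA Y) (Om Z W) \<in> Cs" "Om (phiA Z) (br Y W) \<in> Cs"
    using OmCs aCs assms G by auto
  have "Om (nablaa (phiA X) (nablaa Y Z)) (phiA (phiA W))
     = a (phiA (phiA X)) (Om (nablaa Y Z) (phiA W)) - Om (phiA (nablaa Y Z)) (br (phiA X) (phiA W))"
    using nad G by simp
  also have "Om (nablaa Y Z) (phiA W) = a (phiA Y) (Om Z W) - Om (phiA Z) (br Y W)"
    using nad assms by simp
  also have "a (phiA (phiA X)) (a (phiA Y) (Om Z W) - Om (phiA Z) (br Y W))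
      = a (phiA (phiA X)) (a (phiA Y) (Om Z W)) - a (phiA (phiA X)) (Om (phiA Z) (br Y W))"
    using a_difff f G by simp
  also have "Om (phiA (nablaa Y Z)) (br (phiA X) (phiA W))
      = Om (nablaa (phiA Y) (phiA Z)) (phiA (br X W))"
    using naEQ br_phi assms by simp
  also have "\<dots> = a (phiA (phiA Y)) (Om (phiA Z) (br X W)) - Om (phiA (phiA Z)) (br (phiA Y) (br X W))"
    using nad G by simp
  finally show ?thesis by (simp only: sub4)
qed

end



lemma comb: fixes d aU oU aU' oU' t1 t2 t3 t4 t1' t4' A1 A2 A1' A2' :: "'b::ab_group_add"
  assumes "d = (A1 - A2) - (A1' - A2')" "A1 = aU - oU" "A1' = aU' - oU'"
    "A2 = t1 - t2 - t3 + t4" "A2' = t1' - t3 - t2 + t4'" "aU - aU' = t1 - t1'" "oU - oU' = t4' - t4"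
  shows "d = 0"
proof -
  have "d = (aU - aU') - (oU - oU') - t1 + t1' - t4 + t4'"
    unfolding assms(1-5) by (simp add: algebra_simps)
  then show ?thesis unfolding assms(6,7) by (simp add: algebra_simps)
qed
lemma jj: fixes A B C D :: "'b::ab_group_add"
  assumes "A + B + C = 0" "B = - D" shows "- C = A - D"
proof -
  have "A + B = - C" using assms(1) by (rule add_eq_0_iff2[THEN iffD1])
  then show ?thesis unfolding assms(2) by simp
qed

context pk begin

lemma pbCs: "f \<in> Cs \<Longrightarrow> pb ph f \<in> Cs"
  using parts(2) unfolding diffeo_on_def by blast

lemma p4: assumes "X \<in> G" "Y \<in> G" "W \<in> G"
  shows "br (br X Y) (phiA W) = br (phiA X) (br Y W) - br (phiA Y) (br X W)"
proof -
  have j: "br (phiA X) (br Y W) + br (phiA Y) (br W X) + br (phiA W) (br X Y) = 0"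
    using jac assms by blast
  have "br (phiA Y) (br W X) = br (phiA Y) ((-1) *\<^sub>R br X W)"
    using br_skew[of W X] assms by simp
  also have "\<dots> = - br (phiA Y) (br X W)"
    using br_scale2[of "phiA Y" "br X W" "-1"] assms phiG brG by simp
  finally have "- br (phiA W) (br X Y) = br (phiA X) (br Y W) - br (phiA Y) (br X W)"
    by (rule jj[OF j])
  moreover have "- br (phiA W) (br X Y) = br (br X Y) (phiA W)"
    using br_skew[of "phiA W" "br X Y"] assms phiG brG by simp
  ultimately show ?thesis by simp
qed

lemma LS: assumes E: "X \<in> E" "Y \<in> E" "Z \<in> E"
  shows "nablaa (nablaa X Y) (phiA Z) - nablaa (phiA X) (nablaa Y Z)
       = nablaa (nablaa Y X) (phiA Z) - nablaa (phiA Y) (nablaa X Z)"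
proof -
  have G: "X \<in> G" "Y \<in> G" "Z \<in> G" using E EG by auto
  have UG: "nablaa X Y \<in> G" "nablaa Y X \<in> G" "nablaa Y Z \<in> G" "nablaa X Z \<in> G"
    using G naG by auto
  have UU: "nablaa X Y - nablaa Y X = br X Y" using key1 E n_tors G by simp
  have DG: "nablaa (nablaa X Y) (phiA Z) - nablaa (phiA X) (nablaa Y Z)
      - (nablaa (nablaa Y X) (phiA Z) - nablaa (phiA Y) (nablaa X Z)) \<in> G"
    using UG G naG phiG Gminus by simp
  have "nablaa (nablaa X Y) (phiA Z) - nablaa (phiA X) (nablaa Y Z)
      - (nablaa (nablaa Y X) (phiA Z) - nablaa (phiA Y) (nablaa X Z)) = 0"
  proof (rule Om_nd2[OF DG])
    fix W assume W: "W \<in> G"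
    have TG: "phiA (phiA W) \<in> G" "phiA W \<in> G" using W phiG by auto
    have AG: "nablaa (nablaa X Y) (phiA Z) \<in> G" "nablaa (phiA X) (nablaa Y Z) \<in> G"
      "nablaa (nablaa Y X) (phiA Z) \<in> G" "nablaa (phiA Y) (nablaa X Z) \<in> G"
      using UG G naG phiG by auto
    have e0: "Om (nablaa (nablaa X Y) (phiA Z) - nablaa (phiA X) (nablaa Y Z)
      - (nablaa (nablaa Y X) (phiA Z) - nablaa (phiA Y) (nablaa X Z))) (phiA (phiA W))
      = (Om (nablaa (nablaa X Y) (phiA Z)) (phiA (phiA W)) - Om (nablaa (phiA X) (nablaa Y Z)) (phiA (phiA W)))
       - (Om (nablaa (nablaa Y X) (phiA Z)) (phiA (phiA W)) - Om (nablaa (phiA Y) (nablaa X Z)) (phiA (phiA W)))"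
      using Om_diff1 AG TG Gminus by simp
    note e1 = T1[OF UG(1) G(3) W]
    note e1' = T1[OF UG(2) G(3) W]
    note e2 = T2[OF G(1) G(2) G(3) W]
    note e2' = T2[OF G(2) G(1) G(3) W]
    have fC: "Om Z W \<in> Cs" "pb ph (Om Z W) \<in> Cs" using OmCs G W pbCs by auto
    have p12: "a (phiA (nablaa X Y)) (pb ph (Om Z W)) - a (phiA (nablaa Y X)) (pb ph (Om Z W))
       = a (phiA (phiA X)) (a (phiA Y) (Om Z W)) - a (phiA (phiA Y)) (a (phiA X) (Om Z W))"
    proof -
      have "a (phiA (nablaa X Y)) (pb ph (Om Z W)) - a (phiA (nablaa Y X)) (pb ph (Om Z W))
          = a (phiA (nablaa X Y) - phiA (nablaa Y X)) (pb ph (Om Z W))"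
        using a_diffX UG phiG fC by simp
      also have "\<dots> = a (phiA (br X Y)) (pb ph (Om Z W))"
        using phi_diff[OF UG(1,2)] UU by simp
      also have "\<dots> = a (br (phiA X) (phiA Y)) (pb ph (Om Z W))"
        using br_phi G by simp
      also have "\<dots> = a (phiA (phiA X)) (a (phiA Y) (Om Z W)) - a (phiA (phiA Y)) (a (phiA X) (Om Z W))"
        using algd(3) G phiG fC by blast
      finally show ?thesis .
    qed
    have p35: "Om (phiA (phiA Z)) (br (nablaa X Y) (phiA W)) - Om (phiA (phiA Z)) (br (nablaa Y X) (phiA W))
       = Om (phiA (phiA Z)) (br (phiA X) (br Y W)) - Om (phiA (phiA Z)) (br (phiA Y) (br X W))"
    proof -
      have VG: "phiA (phiA Z) \<in> G" using G phiG by auto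
      have "Om (phiA (phiA Z)) (br (nablaa X Y) (phiA W)) - Om (phiA (phiA Z)) (br (nablaa Y X) (phiA W))
          = Om (phiA (phiA Z)) (br (nablaa X Y) (phiA W) - br (nablaa Y X) (phiA W))"
        using Om_diff2 VG brG UG TG by simp
      also have "\<dots> = Om (phiA (phiA Z)) (br (br X Y) (phiA W))"
        using br_diff1[OF UG(1,2) TG(2)] UU by simp
      also have "\<dots> = Om (phiA (phiA Z)) (br (phiA X) (br Y W) - br (phiA Y) (br X W))"
        using p4 G W by simp
      also have "\<dots> = Om (phiA (phiA Z)) (br (phiA X) (br Y W)) - Om (phiA (phiA Z)) (br (phiA Y) (br X W))"
        using Om_diff2 VG brG G W phiG by simp
      finally show ?thesis .
    qed
    show "Om (nablaa (nablaa X Y) (phiA Z) - nablaa (phiA X) (nablaa Y Z)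
      - (nablaa (nablaa Y X) (phiA Z) - nablaa (phiA Y) (nablaa X Z))) (phiA (phiA W)) = 0"
      by (rule comb[OF e0 e1 e1' e2 e2' p12 p35])
  qed
  then show ?thesis by simp
qed

lemma hlaE: "hom_Lie_algebra E phiA br"
proof -
  have 1: "\<forall>X\<in>E. \<forall>Y\<in>E. br X Y \<in> E" using brE by blast
  have 2: "\<forall>X\<in>E. real_linear_on E (br X)" unfolding real_linear_on_def using br_add2 br_scale2 EG by blast
  have 3: "\<forall>X\<in>E. \<forall>Y\<in>E. br X Y = - br Y X" using br_skew EG by blast
  have 4: "\<forall>X\<in>E. \<forall>Y\<in>E. phiA (br X Y) = br (phiA X) (phiA Y)" using br_phi EG by blast
  have 5: "\<forall>X\<in>E. \<forall>Y\<in>E. \<forall>Z\<in>E. br (phiA X) (br Y Z) + br (phiA Y) (br Z X) + br (phiA Z) (br X Y) = 0"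
    using jac EG by blast
  show ?thesis unfolding hom_Lie_algebra_def using 1 2 3 4 5 by blast
qed

lemma secE: "sec_module Cs sm E"
proof -
  have s: "\<forall>X\<in>G. \<forall>c. sm (\<lambda>_. c) X = c *\<^sub>R X"
     "\<forall>X\<in>G. \<forall>Y\<in>G. \<forall>f\<in>Cs. sm f (X + Y) = sm f X + sm f Y"
     "\<forall>X\<in>G. \<forall>f\<in>Cs. \<forall>g\<in>Cs. sm (f + g) X = sm f X + sm g X"
     "\<forall>X\<in>G. \<forall>f\<in>Cs. \<forall>g\<in>Cs. sm (f * g) X = sm f (sm g X)"
    using secm unfolding sec_module_def by blast+
  have 1: "\<forall>X\<in>E. \<forall>c. sm (\<lambda>_. c) X = c *\<^sub>R X" using s(1) EG by blast
  have 2: "\<forall>X\<in>E. \<forall>Y\<in>E. \<forall>f\<in>Cs. sm f (X + Y) = sm f X + sm f Y" using s(2) EG by blast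
  have 3: "\<forall>X\<in>E. \<forall>f\<in>Cs. \<forall>g\<in>Cs. sm (f + g) X = sm f X + sm g X" using s(3) EG by blast
  have 4: "\<forall>X\<in>E. \<forall>f\<in>Cs. \<forall>g\<in>Cs. sm (f * g) X = sm f (sm g X)" using s(4) EG by blast
  have 5: "\<forall>X\<in>E. \<forall>Y\<in>E. X + Y \<in> E" using E_add by blast
  have 6: "\<forall>X\<in>E. \<forall>f\<in>Cs. sm f X \<in> E" using E_sm by blast
  show ?thesis unfolding sec_module_def using E0 1 2 3 4 5 6 by blast
qed

lemma hbE: "hom_bundle Cs ph sm E phiA"
proof -
  have b: "bij_betw phiA E E"
    unfolding bij_betw_def
  proof
    show "inj_on phiA E"
      using inj_on_subset[OF bij_betw_imp_inj_on[OF phi_bij]] EG by blast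
    show "phiA ` E = E" using E_phi E_phi_surj by blast
  qed
  have l: "real_linear_on E phiA" unfolding real_linear_on_def using phi_add phi_scale EG by blast
  have s: "\<forall>X\<in>E. \<forall>f\<in>Cs. phiA (sm f X) = sm (pb ph f) (phiA X)" using phi_sm EG by blast
  show ?thesis unfolding hom_bundle_def using secE b l s by blast
qed

lemma amE: "anchor_map Cs ph sm E a"
  unfolding anchor_map_def using aD a_addX a_smX EG by blast

lemma algdE: "hom_Lie_algebroid Cs ph sm E phiA br a"
proof -
  have 1: "\<forall>X\<in>E. \<forall>Y\<in>E. \<forall>f\<in>Cs. br X (sm f Y) = sm (pb ph f) (br X Y) + sm (a (phiA X) f) (phiA Y)"
    using algd(1) EG by blast
  have 2: "\<forall>X\<in>E. \<forall>f\<in>Cs. pb ph (a X f) = a (phiA X) (pb ph f)" using algd(2) EG by blast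
  have 3: "\<forall>X\<in>E. \<forall>Y\<in>E. \<forall>f\<in>Cs. a (br X Y) (pb ph f) = a (phiA X) (a Y f) - a (phiA Y) (a X f)"
    using algd(3) EG by blast
  show ?thesis unfolding hom_Lie_algebroid_def using hbE hlaE amE 1 2 3 by blast
qed

lemma main: "(\<forall>X\<in>E. \<forall>Y\<in>E. nablaa X Y \<in> E)
       \<and> (\<forall>X\<in>E. \<forall>Y\<in>E. \<forall>Z\<in>E.
            nablaa (nablaa X Y) (phiA Z) - nablaa (phiA X) (nablaa Y Z)
              = nablaa (nablaa Y X) (phiA Z) - nablaa (phiA Y) (nablaa X Z))
       \<and> (\<forall>X\<in>E. \<forall>Y\<in>E. nablaa X Y - nablaa Y X = br X Y)
       \<and> hom_Lie_algebra E phiA br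
       \<and> hom_Lie_algebroid Cs ph sm E phiA br a"
proof (intro conjI)
  show "\<forall>X\<in>E. \<forall>Y\<in>E. nablaa X Y \<in> E" using key1 n_E EG by simp
  show "\<forall>X\<in>E. \<forall>Y\<in>E. \<forall>Z\<in>E.
            nablaa (nablaa X Y) (phiA Z) - nablaa (phiA X) (nablaa Y Z)
              = nablaa (nablaa Y X) (phiA Z) - nablaa (phiA Y) (nablaa X Z)" using LS by blast
  show "\<forall>X\<in>E. \<forall>Y\<in>E. nablaa X Y - nablaa Y X = br X Y" using key1 n_tors EG by simp
  show "hom_Lie_algebra E phiA br" by (rule hlaE)
  show "hom_Lie_algebroid Cs ph sm E phiA br a" by (rule algdE)
qed

end


theorem mainTheorem7:
  fixes Cs :: "('m \<Rightarrow> real) set" and \<phi> :: "'m \<Rightarrow> 'm"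
    and sm :: "('m \<Rightarrow> real) \<Rightarrow> 'a::real_vector \<Rightarrow> 'a" and G :: "'a set"
    and phiA K :: "'a \<Rightarrow> 'a" and br nabla nablaa :: "'a \<Rightarrow> 'a \<Rightarrow> 'a"
    and a :: "'a \<Rightarrow> ('m \<Rightarrow> real) \<Rightarrow> ('m \<Rightarrow> real)"
    and g \<Omega> :: "'a \<Rightarrow> 'a \<Rightarrow> ('m \<Rightarrow> real)" and \<epsilon> :: real
  assumes pK: "para_Kaehler_hom_Lie_algebroid Cs \<phi> sm G phiA br a K g nabla"
    and Omega_def: "\<And>X Y. \<Omega> X Y = g (phiA (K X)) Y"
    and nablaa_sec: "\<forall>X\<in>G. \<forall>Y\<in>G. nablaa X Y \<in> G"
    and nablaa_def: "\<forall>X\<in>G. \<forall>Y\<in>G. \<forall>Z\<in>G.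
          \<Omega> (nablaa X Y) (phiA Z) = a (phiA X) (\<Omega> Y Z) - \<Omega> (phiA Y) (br X Z)"
    and eps: "\<epsilon> = 1 \<or> \<epsilon> = -1"
  shows "(\<forall>X\<in>eigen_sections G phiA K \<epsilon>. \<forall>Y\<in>eigen_sections G phiA K \<epsilon>.
            nablaa X Y \<in> eigen_sections G phiA K \<epsilon>)
       \<and> (\<forall>X\<in>eigen_sections G phiA K \<epsilon>. \<forall>Y\<in>eigen_sections G phiA K \<epsilon>.
          \<forall>Z\<in>eigen_sections G phiA K \<epsilon>.
            nablaa (nablaa X Y) (phiA Z) - nablaa (phiA X) (nablaa Y Z)
              = nablaa (nablaa Y X) (phiA Z) - nablaa (phiA Y) (nablaa X Z))
       \<and> (\<forall>X\<in>eigen_sections G phiA K \<epsilon>. \<forall>Y\<in>eigen_sections G phiA K \<epsilon>.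
            nablaa X Y - nablaa Y X = br X Y)
       \<and> hom_Lie_algebra (eigen_sections G phiA K \<epsilon>) phiA br
       \<and> hom_Lie_algebroid Cs \<phi> sm (eigen_sections G phiA K \<epsilon>) phiA br a"
proof -
  interpret pk Cs \<phi> sm G phiA K br nabla nablaa a g \<Omega> \<epsilon>
    by (rule pk.intro[OF pK Omega_def nablaa_sec nablaa_def eps])
  show ?thesis by (rule main)
qed

end
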